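(* Let $G$ be a finite directed acyclic graph whose input nodes (the nodes with no incoming edge) are the coordinates of a vector $\bm x$, and let $o$ be any leaf node of $G$. For an input node $x$, let $\mathcal P(x,o)$ be the set of directed paths from $x$ to $o$; for a path ${\bm p}$, let $\tilde{\bm p}$ be the same path without its starting node $x$, and for a node $p$ let $d_p$ be its in-degree. Then $$\sum_{x\in\bm x}\ \sum_{{\bm p}\in\mathcal P(x,o)}\ \prod_{p\in\tilde{\bm p}}\frac{1}{d_p}=1.$$ *)

theory Defs
  imports Complex_Main
begin

definition input_nodes :: "'a set \<Rightarrow> ('a \<times> 'a) set \<Rightarrow> 'a set" where
  "input_nodes V E = {v \<in> V. \<forall>u. (u, v) \<notin> E}"

definition in_degree :: "('a \<times> 'a) set \<Rightarrow> 'a \<Rightarrow> nat" where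
  "in_degree E v = card {u. (u, v) \<in> E}"

definition dpaths :: "('a \<times> 'a) set \<Rightarrow> 'a \<Rightarrow> 'a \<Rightarrow> 'a list set" where
  "dpaths E x t = {p. p \<noteq> [] \<and> hd p = x \<and> last p = t \<and> successively (\<lambda>u v. (u, v) \<in> E) p}"

end

theory Submission
  imports Defs
begin

lemma dpaths_decomp:
  "dpaths E x v = (if x = v then {[v]} else {}) \<union>
     (\<Union>u\<in>{u. (u,v)\<in>E}. (\<lambda>p. p@[v]) ` dpaths E x u)"
proof (rule set_eqI)
  fix p
  show "p \<in> dpaths E x v \<longleftrightarrow> p \<in> (if x = v then {[v]} else {}) \<union>
     (\<Union>u\<in>{u. (u,v)\<in>E}. (\<lambda>p. p@[v]) ` dpaths E x u)"
  proof
    assume p: "p \<in> dpaths E x v"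
    then have pn: "p \<noteq> []" "hd p = x" "last p = v" "successively (\<lambda>u v. (u, v) \<in> E) p"
      unfolding dpaths_def by auto
    obtain ys y where py: "p = ys @ [y]" using pn(1) rev_exhaust by blast
    have yv: "y = v" using pn(3) py by simp
    show "p \<in> (if x = v then {[v]} else {}) \<union>
     (\<Union>u\<in>{u. (u,v)\<in>E}. (\<lambda>p. p@[v]) ` dpaths E x u)"
    proof (cases "ys = []")
      case True
      then have "p = [v]" "x = v" using py yv pn(2) by simp_all
      then show ?thesis by simp
    next
      case False
      have s: "successively (\<lambda>u v. (u, v) \<in> E) ys" "(last ys, y) \<in> E"
        using False pn(4) py by (simp_all add: successively_append_iff)
      have "hd ys = x" using pn(2) py False by simp
      then have "ys \<in> dpaths E x (last ys)" using False s(1) unfolding dpaths_def by simp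
      then have "p \<in> (\<lambda>p. p@[v]) ` dpaths E x (last ys)" using py yv by blast
      then show ?thesis using s(2) yv by blast
    qed
  next
    assume "p \<in> (if x = v then {[v]} else {}) \<union>
     (\<Union>u\<in>{u. (u,v)\<in>E}. (\<lambda>p. p@[v]) ` dpaths E x u)"
    then show "p \<in> dpaths E x v"
    proof
      assume "p \<in> (if x = v then {[v]} else {})"
      then have "p = [v]" "x = v" by (simp_all split: if_splits)
      then show ?thesis unfolding dpaths_def by simp
    next
      assume "p \<in> (\<Union>u\<in>{u. (u,v)\<in>E}. (\<lambda>p. p@[v]) ` dpaths E x u)"
      then obtain u q where u: "(u,v) \<in> E" and q: "q \<in> dpaths E x u" and pq: "p = q @ [v]"
        by blast
      from q have qn: "q \<noteq> []" "hd q = x" "last q = u" "successively (\<lambda>u v. (u, v) \<in> E) q"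
        unfolding dpaths_def by auto
      have "successively (\<lambda>u v. (u, v) \<in> E) (q @ [v])"
        using qn u by (simp add: successively_append_iff)
      then show ?thesis using qn pq unfolding dpaths_def by simp
    qed
  qed
qed

lemma dpaths_finite:
  assumes "wf E" "finite E"
  shows "finite (dpaths E x v)"
  using assms(1)
proof (induction v rule: wf_induct_rule)
  case (less v)
  have fin: "finite {u. (u,v)\<in>E}"
    by (rule finite_subset[of _ "fst ` E"]) (use assms(2) in force)+
  show ?case
    by (subst dpaths_decomp) (use fin less in auto)
qed

lemma sum_dpaths:
  assumes "wf E" "finite E"
  shows "(\<Sum>p\<in>dpaths E x v. h p) = (if x = v then h [v] else 0)
     + (\<Sum>u\<in>{u. (u,v)\<in>E}. \<Sum>p\<in>dpaths E x u. h (p @ [v]))"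
proof -
  have fin: "finite {u. (u,v)\<in>E}"
    by (rule finite_subset[of _ "fst ` E"]) (use assms(2) in force)+
  have ne: "\<And>u p. p \<in> dpaths E x u \<Longrightarrow> p \<noteq> [] \<and> last p = u"
    unfolding dpaths_def by auto
  have "(\<Sum>p\<in>dpaths E x v. h p) = sum h (if x = v then {[v]} else {}) +
     sum h (\<Union>u\<in>{u. (u,v)\<in>E}. (\<lambda>p. p@[v]) ` dpaths E x u)"
    apply (subst dpaths_decomp)
    apply (rule sum.union_disjoint)
    using fin dpaths_finite[OF assms] ne by auto
  also have "sum h (\<Union>u\<in>{u. (u,v)\<in>E}. (\<lambda>p. p@[v]) ` dpaths E x u)
     = (\<Sum>u\<in>{u. (u,v)\<in>E}. sum h ((\<lambda>p. p@[v]) ` dpaths E x u))"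
    apply (rule sum.UNION_disjoint)
    using fin dpaths_finite[OF assms] apply auto
    by (metis ne)
  also have "\<dots> = (\<Sum>u\<in>{u. (u,v)\<in>E}. \<Sum>p\<in>dpaths E x u. h (p @ [v]))"
    apply (rule sum.cong[OF refl])
    apply (subst sum.reindex)
    by (auto simp: inj_on_def)
  finally show ?thesis by simp
qed

theorem lemma2:
  fixes V :: "'a set" and E :: "('a \<times> 'a) set" and t :: 'a
  assumes "finite V"
    and "E \<subseteq> V \<times> V"
    and "\<forall>v. (v, v) \<notin> E\<^sup>+"
    and "t \<in> V"
    and "\<forall>w. (t, w) \<notin> E"
  shows "(\<Sum>x\<in>input_nodes V E. \<Sum>p\<in>dpaths E x t.
            (\<Prod>q\<leftarrow>tl p. 1 / real (in_degree E q))) = 1"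
proof -
  define h where "h = (\<lambda>p. (\<Prod>q\<leftarrow>tl p. 1 / real (in_degree E q)))"
  define I where "I = input_nodes V E"
  have finE: "finite E" using assms(1,2) finite_subset by blast
  have wfE: "wf E" using finite_acyclic_wf[OF finE] assms(3) by (simp add: acyclic_def)
  have finI: "finite I" unfolding I_def input_nodes_def using assms(1) by simp
  have "v \<in> V \<longrightarrow> (\<Sum>x\<in>I. \<Sum>p\<in>dpaths E x v. h p) = 1" for v
    using wfE
  proof (induction v rule: wf_induct_rule)
    case (less v)
    show ?case
    proof
      assume vV: "v \<in> V"
      define P where "P = {u. (u,v)\<in>E}"
      have finP: "finite P"
        unfolding P_def by (rule finite_subset[of _ "fst ` E"]) (use finE in force)+
      have PV: "P \<subseteq> V" unfolding P_def using assms(2) by auto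
      have hv: "\<And>x. h [x] = 1" unfolding h_def by simp
      have hp: "h (p @ [v]) = h p * (1 / real (card P))" if "p \<in> dpaths E x u" for p x u
      proof -
        have "p \<noteq> []" using that unfolding dpaths_def by auto
        then have "tl (p @ [v]) = tl p @ [v]" by (cases p) auto
        then show ?thesis unfolding h_def in_degree_def P_def by simp
      qed
      have "(\<Sum>x\<in>I. \<Sum>p\<in>dpaths E x v. h p) =
         (\<Sum>x\<in>I. (if x = v then h [v] else 0) + (\<Sum>u\<in>P. \<Sum>p\<in>dpaths E x u. h p * (1 / real (card P))))"
        apply (rule sum.cong[OF refl])
        apply (subst sum_dpaths[OF wfE finE])
        unfolding P_def using hp by (simp add: P_def)
      also have "\<dots> = (\<Sum>x\<in>I. (if x = v then h [v] else 0)) + (1 / real (card P)) * (\<Sum>u\<in>P. \<Sum>x\<in>I. \<Sum>p\<in>dpaths E x u. h p)"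
      proof -
        have "(\<Sum>x\<in>I. \<Sum>u\<in>P. \<Sum>p\<in>dpaths E x u. h p * (1 / real (card P)))
            = (1 / real (card P)) * (\<Sum>u\<in>P. \<Sum>x\<in>I. \<Sum>p\<in>dpaths E x u. h p)"
          by (subst sum.swap) (simp add: sum_distrib_left mult.commute)
        then show ?thesis by (simp only: sum.distrib)
      qed
      also have "(\<Sum>x\<in>I. (if x = v then h [v] else 0)) = (\<Sum>x\<in>I. (if x = v then 1 else 0))"
        by (rule sum.cong) (use hv in auto)
      also have "(\<Sum>u\<in>P. \<Sum>x\<in>I. \<Sum>p\<in>dpaths E x u. h p) = (\<Sum>u\<in>P. 1)"
        apply (rule sum.cong[OF refl])
        using less PV unfolding P_def by auto
      finally have eq: "(\<Sum>x\<in>I. \<Sum>p\<in>dpaths E x v. h p) =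
          (\<Sum>x\<in>I. (if x = v then 1 else 0)) + (1 / real (card P)) * real (card P)" by simp
      show "(\<Sum>x\<in>I. \<Sum>p\<in>dpaths E x v. h p) = 1"
      proof (cases "P = {}")
        case True
        then have "v \<in> I" unfolding I_def input_nodes_def P_def using vV by auto
        then show ?thesis using eq finI True by simp
      next
        case False
        then have "v \<notin> I" unfolding I_def input_nodes_def P_def by auto
        moreover have "card P > 0" using False finP by auto
        ultimately show ?thesis using eq finI by simp
      qed
    qed
  qed
  then show ?thesis using assms(4) unfolding h_def I_def by blast
qed

end
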